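(* Let $p$ be a prime, $D$ the quaternion algebra over $\mathbb{Q}$ ramified exactly at $\{p,\infty\}$, $\mathcal{O}$ a maximal order, and $\lambda,\mu\in\mathcal{O}$ with $N(\lambda)=p-1$, $N(\mu)=p$, $\mathrm{tr}(r)=0$ where $r=\lambda\overline{\mu}$. Let $g=\begin{pmatrix}1&\lambda\\0&\mu\end{pmatrix}$, $A=g\overline{g}^T$, and for $\theta\in\mathbb{Q}$, $\theta>0$, let $W_\theta=\{\nu\in M_2(\mathcal{O})^\times:\nu A\overline{\nu}^T=\theta A\}$. Then $W_\theta$ consists exactly of the matrices $\nu=\begin{pmatrix}\alpha&\beta\\\gamma&\delta\end{pmatrix}\in M_2(\mathcal{O})^\times$ such that \[pN(p\alpha+\overline{r}\gamma)+N\big(p(\alpha r+p\beta)+\overline{r}(\gamma r+p\delta)\big)=\theta p^3,\] \[pN(\gamma)+N(\gamma r+p\delta)=\theta p^2,\] \[p\alpha\overline{\gamma}+(\alpha r+p\beta)\overline{(\gamma r+p\delta)}=-\theta p\,\overline{r}.\]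
   Context: $x\mapsto\overline{x}$ is quaternion conjugation, $N(x)=x\overline{x}$ the reduced norm, $\mathrm{tr}(x)=x+\overline{x}$ the reduced trace. For a matrix $M$ over $D$, $\overline{M}^T$ is the transpose of the entrywise conjugate. $M_2(\mathcal{O})^\times=\mathrm{GL}_2(D)\cap M_2(\mathcal{O})$. *)

theory Defs
  imports Complex_Main "HOL-Computational_Algebra.Primes"
begin

text \<open>An element x0 + x1 i + x2 j + x3 k of the quaternion algebra (a,b)_Q,
  where i^2 = a, j^2 = b, k = ij = -ji.\<close>

datatype quat = Quat (re: rat) (im1: rat) (im2: rat) (im3: rat)

definition qadd :: "quat \<Rightarrow> quat \<Rightarrow> quat" where
  "qadd x y = Quat (re x + re y) (im1 x + im1 y) (im2 x + im2 y) (im3 x + im3 y)"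

definition qneg :: "quat \<Rightarrow> quat" where
  "qneg x = Quat (- re x) (- im1 x) (- im2 x) (- im3 x)"

definition qzero :: quat where "qzero = Quat 0 0 0 0"

definition qone :: quat where "qone = Quat 1 0 0 0"

definition qsmult :: "rat \<Rightarrow> quat \<Rightarrow> quat" where
  "qsmult t x = Quat (t * re x) (t * im1 x) (t * im2 x) (t * im3 x)"

definition qmul :: "rat \<Rightarrow> rat \<Rightarrow> quat \<Rightarrow> quat \<Rightarrow> quat" where
  "qmul a b x y = Quat
     (re x * re y + a * im1 x * im1 y + b * im2 x * im2 y - a * b * im3 x * im3 y)
     (re x * im1 y + im1 x * re y - b * im2 x * im3 y + b * im3 x * im2 y)
     (re x * im2 y + im2 x * re y + a * im1 x * im3 y - a * im3 x * im1 y)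
     (re x * im3 y + im3 x * re y + im1 x * im2 y - im2 x * im1 y)"

definition qconj :: "quat \<Rightarrow> quat" where
  "qconj x = Quat (re x) (- im1 x) (- im2 x) (- im3 x)"

text \<open>reduced norm N(x) = x conj(x) and reduced trace tr(x) = x + conj(x);
  both are central (scalar) quaternions, identified with their rational value\<close>
definition qnorm :: "rat \<Rightarrow> rat \<Rightarrow> quat \<Rightarrow> rat" where
  "qnorm a b x = re (qmul a b x (qconj x))"

definition qtr :: "quat \<Rightarrow> rat" where
  "qtr x = re (qadd x (qconj x))"

definition split_at_infty :: "rat \<Rightarrow> rat \<Rightarrow> bool" where
  "split_at_infty a b \<longleftrightarrow>
     (\<exists>x y z :: real. (x, y, z) \<noteq> (0, 0, 0) \<and>
        real_of_rat a * x^2 + real_of_rat b * y^2 = z^2)"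

text \<open>Split at a prime l: the Hilbert equation A x^2 + B y^2 = z^2 has a nontrivial
  solution in Q_l, where A = num(a) den(a), B = num(b) den(b) lie in the same square
  classes as a, b.  By compactness of Z_l this is expressed as: for every k there is a
  primitive integer solution modulo l^k.\<close>
definition int_sq_class :: "rat \<Rightarrow> int" where
  "int_sq_class a = fst (quotient_of a) * snd (quotient_of a)"

definition split_at_prime :: "nat \<Rightarrow> rat \<Rightarrow> rat \<Rightarrow> bool" where
  "split_at_prime l a b \<longleftrightarrow>
     (\<forall>k::nat. \<exists>x y z :: int.
        \<not> (int l dvd x \<and> int l dvd y \<and> int l dvd z) \<and>
        (int l) ^ k dvd (int_sq_class a * x^2 + int_sq_class b * y^2 - z^2))"

definition ramified_exactly_at_p_infty :: "nat \<Rightarrow> rat \<Rightarrow> rat \<Rightarrow> bool" where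
  "ramified_exactly_at_p_infty p a b \<longleftrightarrow>
     a \<noteq> 0 \<and> b \<noteq> 0 \<and> \<not> split_at_infty a b \<and>
     (\<forall>l::nat. prime l \<longrightarrow> (\<not> split_at_prime l a b \<longleftrightarrow> l = p))"

definition is_order :: "rat \<Rightarrow> rat \<Rightarrow> quat set \<Rightarrow> bool" where
  "is_order a b \<O> \<longleftrightarrow>
     qone \<in> \<O> \<and>
     (\<forall>x\<in>\<O>. \<forall>y\<in>\<O>. qadd x y \<in> \<O> \<and> qadd x (qneg y) \<in> \<O> \<and> qmul a b x y \<in> \<O>) \<and>
     (\<exists>e0 e1 e2 e3.
        (\<forall>c0 c1 c2 c3 :: rat.
           qadd (qadd (qsmult c0 e0) (qsmult c1 e1)) (qadd (qsmult c2 e2) (qsmult c3 e3)) = qzero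
           \<longrightarrow> c0 = 0 \<and> c1 = 0 \<and> c2 = 0 \<and> c3 = 0) \<and>
        \<O> = {qadd (qadd (qsmult (of_int c0) e0) (qsmult (of_int c1) e1))
                  (qadd (qsmult (of_int c2) e2) (qsmult (of_int c3) e3)) | c0 c1 c2 c3. True})"

definition is_maximal_order :: "rat \<Rightarrow> rat \<Rightarrow> quat set \<Rightarrow> bool" where
  "is_maximal_order a b \<O> \<longleftrightarrow>
     is_order a b \<O> \<and> (\<forall>\<O>'. is_order a b \<O>' \<and> \<O> \<subseteq> \<O>' \<longrightarrow> \<O>' = \<O>)"

datatype mat2 = Mat2 (m11: quat) (m12: quat) (m21: quat) (m22: quat)

definition mmul :: "rat \<Rightarrow> rat \<Rightarrow> mat2 \<Rightarrow> mat2 \<Rightarrow> mat2" where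
  "mmul a b M N = Mat2
     (qadd (qmul a b (m11 M) (m11 N)) (qmul a b (m12 M) (m21 N)))
     (qadd (qmul a b (m11 M) (m12 N)) (qmul a b (m12 M) (m22 N)))
     (qadd (qmul a b (m21 M) (m11 N)) (qmul a b (m22 M) (m21 N)))
     (qadd (qmul a b (m21 M) (m12 N)) (qmul a b (m22 M) (m22 N)))"

definition mconjT :: "mat2 \<Rightarrow> mat2" where
  "mconjT M = Mat2 (qconj (m11 M)) (qconj (m21 M)) (qconj (m12 M)) (qconj (m22 M))"

definition mone :: mat2 where "mone = Mat2 qone qzero qzero qone"

definition msmult :: "rat \<Rightarrow> mat2 \<Rightarrow> mat2" where
  "msmult t M = Mat2 (qsmult t (m11 M)) (qsmult t (m12 M)) (qsmult t (m21 M)) (qsmult t (m22 M))"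

definition in_GL2 :: "rat \<Rightarrow> rat \<Rightarrow> mat2 \<Rightarrow> bool" where
  "in_GL2 a b M \<longleftrightarrow> (\<exists>N. mmul a b M N = mone \<and> mmul a b N M = mone)"

text \<open>M_2(\<O>)^x = GL_2(D) \<inter> M_2(\<O>)\<close>
definition M2_units :: "rat \<Rightarrow> rat \<Rightarrow> quat set \<Rightarrow> mat2 set" where
  "M2_units a b \<O> = {M. in_GL2 a b M \<and> m11 M \<in> \<O> \<and> m12 M \<in> \<O> \<and> m21 M \<in> \<O> \<and> m22 M \<in> \<O>}"

definition W_set :: "rat \<Rightarrow> rat \<Rightarrow> quat set \<Rightarrow> mat2 \<Rightarrow> rat \<Rightarrow> mat2 set" where
  "W_set a b \<O> A \<theta> = {\<nu> \<in> M2_units a b \<O>. mmul a b (mmul a b \<nu> A) (mconjT \<nu>) = msmult \<theta> A}"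

end

theory Submission
  imports Defs
begin

lemmas D = qadd_def qneg_def qzero_def qone_def qsmult_def qmul_def qconj_def qnorm_def qtr_def mmul_def mconjT_def msmult_def

definition Amat :: "rat \<Rightarrow> quat \<Rightarrow> mat2" where
  "Amat P r = Mat2 (Quat P 0 0 0) r (qconj r) (Quat P 0 0 0)"

abbreviation EE where "EE a b \<nu> A \<equiv> mmul a b (mmul a b \<nu> A) (mconjT \<nu>)"

lemma H11: "m11 (EE a b (Mat2 \<alpha> \<beta> \<gamma> \<delta>) (Amat P r)) = Quat (re (m11 (EE a b (Mat2 \<alpha> \<beta> \<gamma> \<delta>) (Amat P r)))) 0 0 0"
  apply (induct \<alpha>; induct \<beta>; induct r)
  apply (simp add: D Amat_def)
  apply (intro conjI; algebra)
  done

lemma H22: "m22 (EE a b (Mat2 \<alpha> \<beta> \<gamma> \<delta>) (Amat P r)) = Quat (re (m22 (EE a b (Mat2 \<alpha> \<beta> \<gamma> \<delta>) (Amat P r)))) 0 0 0"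
  apply (induct \<gamma>; induct \<delta>; induct r)
  apply (simp add: D Amat_def)
  apply (intro conjI; algebra)
  done

lemma H21: "m21 (EE a b (Mat2 \<alpha> \<beta> \<gamma> \<delta>) (Amat P r)) = qconj (m12 (EE a b (Mat2 \<alpha> \<beta> \<gamma> \<delta>) (Amat P r)))"
  apply (induct \<alpha>; induct \<beta>; induct \<gamma>; induct \<delta>; induct r)
  apply (simp add: D Amat_def)
  apply (intro conjI; algebra)
  done

lemma I2: "P * qnorm a b \<gamma> + qnorm a b (qadd (qmul a b \<gamma> r) (qsmult P \<delta>)) =
    P * re (m22 (EE a b (Mat2 \<alpha> \<beta> \<gamma> \<delta>) (Amat P r))) + qnorm a b \<gamma> * (qnorm a b r - P*(P-1))"
  apply (induct \<gamma>; induct \<delta>; induct r)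
  apply (simp add: D Amat_def)
  apply algebra
  done

lemma I3: "qadd (qsmult P (qmul a b \<alpha> (qconj \<gamma>))) (qmul a b (qadd (qmul a b \<alpha> r) (qsmult P \<beta>)) (qconj (qadd (qmul a b \<gamma> r) (qsmult P \<delta>))))
  = qadd (qsmult P (m12 (EE a b (Mat2 \<alpha> \<beta> \<gamma> \<delta>) (Amat P r)))) (qsmult (qnorm a b r - P*(P-1)) (qmul a b \<alpha> (qconj \<gamma>)))"
  apply (induct \<alpha>; induct \<beta>; induct \<gamma>; induct \<delta>; induct r)
  apply (simp add: D Amat_def)
  apply (intro conjI; algebra)
  done

lemma Assoc: "qadd (qsmult P (qadd (qmul a b \<alpha> r) (qsmult P \<beta>))) (qmul a b (qconj r) (qadd (qmul a b \<gamma> r) (qsmult P \<delta>)))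
  = qadd (qmul a b (qadd (qsmult P \<alpha>) (qmul a b (qconj r) \<gamma>)) r) (qsmult P (qadd (qsmult P \<beta>) (qmul a b (qconj r) \<delta>)))"
  apply (induct \<alpha>; induct \<beta>; induct \<gamma>; induct \<delta>; induct r)
  apply (simp add: D Amat_def)
  apply (intro conjI; algebra)
  done

lemma Sesq: "re (m22 (EE a b (Mat2 x y (qadd (qsmult P \<alpha>) (qmul a b (qconj r) \<gamma>)) (qadd (qsmult P \<beta>) (qmul a b (qconj r) \<delta>))) (Amat P r)))
  = P^2 * re (m11 (EE a b (Mat2 \<alpha> \<beta> \<gamma> \<delta>) (Amat P r)))
   + P * re (qmul a b (m12 (EE a b (Mat2 \<alpha> \<beta> \<gamma> \<delta>) (Amat P r))) r)
   + P * re (qmul a b (qconj r) (m21 (EE a b (Mat2 \<alpha> \<beta> \<gamma> \<delta>) (Amat P r))))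
   + re (qmul a b (qconj r) (qmul a b (m22 (EE a b (Mat2 \<alpha> \<beta> \<gamma> \<delta>) (Amat P r))) r))"
  apply (induct \<alpha>; induct \<beta>; induct \<gamma>; induct \<delta>; induct r)
  apply (simp add: D Amat_def)
  apply algebra
  done


lemma qsmult_cancel: "P \<noteq> 0 \<Longrightarrow> qsmult P x = qsmult P y \<longleftrightarrow> x = y"
  by (cases x; cases y) (simp add: qsmult_def)

lemma qconj_inj: "qconj x = qconj y \<longleftrightarrow> x = y"
  by (cases x; cases y) (simp add: qconj_def)

lemma qconj_smult: "qconj (qsmult t x) = qsmult t (qconj x)"
  by (cases x) (simp add: qconj_def qsmult_def)

lemma smult0: "qadd x (qsmult 0 y) = x"
  by (cases x; cases y) (simp add: qadd_def qsmult_def)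

lemma rterm: assumes "re r = 0" "qnorm a b r = P*(P-1)"
  shows "P * re (qmul a b (qsmult \<theta> r) r) + P * re (qmul a b (qconj r) (qconj (qsmult \<theta> r)))
      + re (qmul a b (qconj r) (qmul a b (Quat (\<theta>*P) 0 0 0) r)) = - \<theta>*P*(P*(P-1))"
  using assms
  apply (induct r)
  apply (simp add: D)
  apply algebra
  done

lemma rneg: "re r = 0 \<Longrightarrow> qsmult (- \<theta> * P) (qconj r) = qsmult P (qsmult \<theta> r)"
  by (cases r) (simp add: qsmult_def qconj_def)

lemma key:
  fixes P \<theta> :: rat
  assumes r0: "re r = 0" and hN: "qnorm a b r = P*(P-1)" and P0: "P > 0"
  shows "EE a b \<nu> (Amat P r) = msmult \<theta> (Amat P r) \<longleftrightarrow>
      (let \<alpha> = m11 \<nu>; \<beta> = m12 \<nu>; \<gamma> = m21 \<nu>; \<delta> = m22 \<nu>;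
           u = qadd (qmul a b \<alpha> r) (qsmult P \<beta>);
           v = qadd (qmul a b \<gamma> r) (qsmult P \<delta>)
       in P * qnorm a b (qadd (qsmult P \<alpha>) (qmul a b (qconj r) \<gamma>))
            + qnorm a b (qadd (qsmult P u) (qmul a b (qconj r) v)) = \<theta> * P ^ 3
        \<and> P * qnorm a b \<gamma> + qnorm a b v = \<theta> * P ^ 2
        \<and> qadd (qsmult P (qmul a b \<alpha> (qconj \<gamma>))) (qmul a b u (qconj v))
            = qsmult (- \<theta> * P) (qconj r))"
proof (cases \<nu>)
  case (Mat2 \<alpha> \<beta> \<gamma> \<delta>)
  define E where "E = EE a b (Mat2 \<alpha> \<beta> \<gamma> \<delta>) (Amat P r)"
  define e11 where "e11 = re (m11 E)"
  define e22 where "e22 = re (m22 E)"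
  have P0': "P \<noteq> 0" using P0 by simp
  have h11: "m11 E = Quat e11 0 0 0" unfolding e11_def E_def by (rule H11)
  have h22: "m22 E = Quat e22 0 0 0" unfolding e22_def E_def by (rule H22)
  have h21: "m21 E = qconj (m12 E)" unfolding E_def by (rule H21)
  have ms: "msmult \<theta> (Amat P r) = Mat2 (Quat (\<theta>*P) 0 0 0) (qsmult \<theta> r) (qsmult \<theta> (qconj r)) (Quat (\<theta>*P) 0 0 0)"
    by (simp add: msmult_def Amat_def qsmult_def)
  have Eq: "E = Mat2 (m11 E) (m12 E) (m21 E) (m22 E)" by simp
  have W: "EE a b \<nu> (Amat P r) = msmult \<theta> (Amat P r) \<longleftrightarrow> e11 = \<theta>*P \<and> m12 E = qsmult \<theta> r \<and> e22 = \<theta>*P"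
  proof -
    have "EE a b \<nu> (Amat P r) = Mat2 (Quat e11 0 0 0) (m12 E) (qconj (m12 E)) (Quat e22 0 0 0)"
      using Eq h11 h22 h21 unfolding E_def Mat2 by metis
    then show ?thesis
      by (simp only: ms mat2.inject quat.inject qconj_smult[symmetric] qconj_inj) auto
  qed
  define u where "u = qadd (qmul a b \<alpha> r) (qsmult P \<beta>)"
  define v where "v = qadd (qmul a b \<gamma> r) (qsmult P \<delta>)"
  have e2: "P * qnorm a b \<gamma> + qnorm a b v = P * e22"
    using I2[of P a b \<gamma> r \<delta> \<alpha> \<beta>] hN unfolding v_def e22_def E_def by simp
  have eq2: "P * qnorm a b \<gamma> + qnorm a b v = \<theta> * P ^ 2 \<longleftrightarrow> e22 = \<theta>*P"
    using P0' by (simp add: e2 power2_eq_square)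
  have e3: "qadd (qsmult P (qmul a b \<alpha> (qconj \<gamma>))) (qmul a b u (qconj v)) = qsmult P (m12 E)"
    using I3[of P a b \<alpha> \<gamma> r \<beta> \<delta>] hN unfolding u_def v_def E_def by (simp add: smult0)
  have eq3: "qadd (qsmult P (qmul a b \<alpha> (qconj \<gamma>))) (qmul a b u (qconj v)) = qsmult (- \<theta> * P) (qconj r)
      \<longleftrightarrow> m12 E = qsmult \<theta> r"
    by (simp only: e3 rneg[OF r0] qsmult_cancel[OF P0'])
  define X where "X = qadd (qsmult P \<alpha>) (qmul a b (qconj r) \<gamma>)"
  define Z where "Z = qadd (qsmult P \<beta>) (qmul a b (qconj r) \<delta>)"
  have e1: "P * qnorm a b X + qnorm a b (qadd (qsmult P u) (qmul a b (qconj r) v))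
      = P * (P^2 * e11 + P * re (qmul a b (m12 E) r) + P * re (qmul a b (qconj r) (m21 E))
             + re (qmul a b (qconj r) (qmul a b (m22 E) r)))"
    using Assoc[of P a b \<alpha> r \<beta> \<gamma> \<delta>] I2[of P a b X r Z \<alpha> \<beta>] hN
      Sesq[where x=\<alpha> and y=\<beta> and \<alpha>=\<alpha> and \<beta>=\<beta> and \<gamma>=\<gamma> and \<delta>=\<delta> and r=r and P=P and a=a and b=b]
    unfolding u_def v_def X_def Z_def E_def e11_def by simp
  have eq1: "m12 E = qsmult \<theta> r \<Longrightarrow> e22 = \<theta>*P \<Longrightarrow>
     (P * qnorm a b X + qnorm a b (qadd (qsmult P u) (qmul a b (qconj r) v)) = \<theta> * P ^ 3 \<longleftrightarrow> e11 = \<theta>*P)"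
  proof -
    assume m12: "m12 E = qsmult \<theta> r" and m22: "e22 = \<theta>*P"
    have "P * qnorm a b X + qnorm a b (qadd (qsmult P u) (qmul a b (qconj r) v))
        = P * (P^2 * e11 - \<theta>*P*(P*(P-1)))"
    proof -
      have s: "P * re (qmul a b (m12 E) r) + P * re (qmul a b (qconj r) (m21 E))
             + re (qmul a b (qconj r) (qmul a b (m22 E) r)) = - \<theta>*P*(P*(P-1))"
        using rterm[OF r0 hN, of \<theta>] by (simp only: h21 h22 m12 m22 mult.commute[of P \<theta>])
      show ?thesis unfolding e1 by (rule arg_cong[where f="\<lambda>x. P*x"]) (use s in linarith)
    qed
    also have "\<dots> = \<theta> * P ^ 3 \<longleftrightarrow> e11 = \<theta>*P"
    proof -
      have "P * (P^2 * e11 - \<theta>*P*(P*(P-1))) - \<theta> * P ^ 3 = P^3 * (e11 - \<theta>*P)"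
        by (simp add: algebra_simps power3_eq_cube power2_eq_square)
      then show ?thesis using P0' by (metis eq_iff_diff_eq_0 mult_eq_0_iff power_not_zero)
    qed
    finally show ?thesis .
  qed
  show ?thesis
    using W eq1 eq2 eq3 unfolding Let_def Mat2 mat2.sel u_def v_def X_def by blast
qed


lemma Acomp:
  assumes "qnorm a b lam = P - 1" "qnorm a b mu = P"
  shows "mmul a b (Mat2 qone lam qzero mu) (mconjT (Mat2 qone lam qzero mu)) = Amat P (qmul a b lam (qconj mu))"
  using assms
  apply (induct lam; induct mu)
  apply (simp add: D Amat_def)
  done

lemma normmul: "qnorm a b (qmul a b x (qconj y)) = qnorm a b x * qnorm a b y"
  apply (induct x; induct y)
  apply (simp add: D)
  apply algebra
  done

lemma tr_re: "qtr x = 2 * re x"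
  by (cases x) (simp add: qtr_def qadd_def qconj_def)

theorem corollary5p7:
  fixes p :: nat and a b \<theta> :: rat and \<O> :: "quat set" and lam mu r :: quat and g A :: mat2
  assumes "prime p"
    and "ramified_exactly_at_p_infty p a b"
    and "is_maximal_order a b \<O>"
    and "lam \<in> \<O>" and "mu \<in> \<O>"
    and "qnorm a b lam = of_nat p - 1"
    and "qnorm a b mu = of_nat p"
    and "r = qmul a b lam (qconj mu)"
    and "qtr r = 0"
    and "g = Mat2 qone lam qzero mu"
    and "A = mmul a b g (mconjT g)"
    and "\<theta> > 0"
  shows "W_set a b \<O> A \<theta> =
    {\<nu> \<in> M2_units a b \<O>.
       let \<alpha> = m11 \<nu>; \<beta> = m12 \<nu>; \<gamma> = m21 \<nu>; \<delta> = m22 \<nu>; P = of_nat p;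
           u = qadd (qmul a b \<alpha> r) (qsmult P \<beta>);
           v = qadd (qmul a b \<gamma> r) (qsmult P \<delta>)
       in P * qnorm a b (qadd (qsmult P \<alpha>) (qmul a b (qconj r) \<gamma>))
            + qnorm a b (qadd (qsmult P u) (qmul a b (qconj r) v)) = \<theta> * P ^ 3
        \<and> P * qnorm a b \<gamma> + qnorm a b v = \<theta> * P ^ 2
        \<and> qadd (qsmult P (qmul a b \<alpha> (qconj \<gamma>))) (qmul a b u (qconj v))
            = qsmult (- \<theta> * P) (qconj r)}"
proof -
  define P :: rat where "P = of_nat p"
  have P0: "P > 0" using assms(1) prime_gt_0_nat unfolding P_def by simp
  have hA: "A = Amat P r"
    using Acomp[of a b lam P mu] assms(6,7,8,10,11) unfolding P_def by simp
  have hN: "qnorm a b r = P*(P-1)"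
    using normmul[of a b lam mu] assms(6,7,8) unfolding P_def by (simp add: mult.commute)
  have r0: "re r = 0" using assms(9) by (simp add: tr_re)
  show ?thesis
    unfolding W_set_def hA
    using key[OF r0 hN P0, of _ \<theta>] unfolding P_def Let_def by auto
qed

end
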